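(* Let $\varphi$ be a 3SAT formula on variables $x_1,\dots,x_n$ in which every clause consists of exactly three literals on three distinct variables, and let $(X,\mathcal{F})$ be the game hypergraph constructed from $\varphi$ as described in the context. Then, in the strict Avoider-Enforcer game on $(X,\mathcal{F})$ in which Enforcer makes the first move, Avoider has a winning strategy if and only if $\varphi$ is satisfiable. (Note that $|X|=4n$ and every losing set has at most six elements.)
   Context: A (strict) Avoider-Enforcer game is given by a finite set $X$ (the board) and a family $\mathcal{F}$ of subsets of $X$ (the losing sets). Two players, Avoider and Enforcer, alternately claim one previously unclaimed element of $X$ per move until all elements of $X$ are claimed. Enforcer wins if Avoider has claimed all elements of some losing set $f\in\mathcal{F}$; otherwise Avoider wins. Construction from a 3SAT formula $\varphi$ on variables $x_1,\dots,x_n$ (each clause having exactly three literals on three distinct variables): the board is $X=\bigcup_{i=1}^n\{a_i,s_i,x_i,\overline{x_i}\}$, consisting of $4n$ distinct vertices; the set $B_i=\{a_i,s_i,x_i,\overline{x_i}\}$ is called box $i$. The vertices $x_i,\overline{x_i}$ are identified with the literals $x_i,\overline{x_i}$ of $\varphi$. The family $\mathcal{F}$ consists of (1) for each $i$, all four 3-element subsets of $B_i$; and (2) for each clause $C=\ell_i\lor\ell_j\lor\ell_k$ of $\varphi$, where $\ell_h\in\{x_h,\overline{x_h}\}$ for $h=i,j,k$, the set $L_C=\{s_i,s_j,s_k,\overline{\ell_i},\overline{\ell_j},\overline{\ell_k}\}$, where $\overline{\ell}$ denotes the negation of literal $\ell$ (with $\overline{\overline{x_h}}=x_h$). *)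

theory Defs
  imports Main
begin

datatype player = Avoider | Enforcer

text \<open>Since the board is finite, the least fixed point captures exactly the existence of a
  winning strategy.\<close>
inductive aw :: "'a set \<Rightarrow> 'a set set \<Rightarrow> 'a set \<Rightarrow> 'a set \<Rightarrow> player \<Rightarrow> bool"
  for X :: "'a set" and F :: "'a set set" where
  game_over: "X \<subseteq> A \<union> E \<Longrightarrow> (\<forall>f\<in>F. \<not> f \<subseteq> A) \<Longrightarrow> aw X F A E p"
| avoider_move: "x \<in> X - (A \<union> E) \<Longrightarrow> aw X F (insert x A) E Enforcer
      \<Longrightarrow> aw X F A E Avoider"
| enforcer_move: "X - (A \<union> E) \<noteq> {}
      \<Longrightarrow> (\<forall>x \<in> X - (A \<union> E). aw X F A (insert x E) Avoider)
      \<Longrightarrow> aw X F A E Enforcer"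

definition avoider_has_winning_strategy :: "'a set \<Rightarrow> 'a set set \<Rightarrow> player \<Rightarrow> bool" where
  "avoider_has_winning_strategy X F first \<longleftrightarrow> aw X F {} {} first"

text \<open>A literal is a pair (i, b): b = True means x_i, b = False means the negation of x_i.\<close>

type_synonym literal = "nat \<times> bool"
type_synonym clause = "literal \<times> literal \<times> literal"

fun clause_lits :: "clause \<Rightarrow> literal set" where
  "clause_lits (l1, l2, l3) = {l1, l2, l3}"

fun wf_clause :: "nat \<Rightarrow> clause \<Rightarrow> bool" where
  "wf_clause n ((i,_), (j,_), (k,_)) \<longleftrightarrow>
     i \<in> {1..n} \<and> j \<in> {1..n} \<and> k \<in> {1..n} \<and> i \<noteq> j \<and> i \<noteq> k \<and> j \<noteq> k"

definition wf_3sat :: "nat \<Rightarrow> clause list \<Rightarrow> bool" where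
  "wf_3sat n \<phi> \<longleftrightarrow> (\<forall>C \<in> set \<phi>. wf_clause n C)"

definition lit_true :: "(nat \<Rightarrow> bool) \<Rightarrow> literal \<Rightarrow> bool" where
  "lit_true \<sigma> l \<longleftrightarrow> \<sigma> (fst l) = snd l"

definition satisfiable :: "clause list \<Rightarrow> bool" where
  "satisfiable \<phi> \<longleftrightarrow> (\<exists>\<sigma>. \<forall>C \<in> set \<phi>. \<exists>l \<in> clause_lits C. lit_true \<sigma> l)"

datatype vertex = VA nat | VS nat | VPos nat | VNeg nat

definition box :: "nat \<Rightarrow> vertex set" where
  "box i = {VA i, VS i, VPos i, VNeg i}"

fun lit_vertex :: "literal \<Rightarrow> vertex" where
  "lit_vertex (i, True) = VPos i"
| "lit_vertex (i, False) = VNeg i"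

fun neg_lit :: "literal \<Rightarrow> literal" where
  "neg_lit (i, b) = (i, \<not> b)"

definition board :: "nat \<Rightarrow> vertex set" where
  "board n = (\<Union>i\<in>{1..n}. box i)"

fun clause_set :: "clause \<Rightarrow> vertex set" where
  "clause_set (l1, l2, l3) =
     {VS (fst l1), VS (fst l2), VS (fst l3),
      lit_vertex (neg_lit l1), lit_vertex (neg_lit l2), lit_vertex (neg_lit l3)}"

definition losing_sets :: "nat \<Rightarrow> clause list \<Rightarrow> vertex set set" where
  "losing_sets n \<phi> =
     {T. \<exists>i\<in>{1..n}. T \<subseteq> box i \<and> card T = 3} \<union> clause_set ` set \<phi>"

end

theory Submission
  imports Defs
begin


lemma box_disj: "x \<in> box i \<Longrightarrow> x \<in> box j \<Longrightarrow> i = j"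
  by (auto simp: box_def)

lemma finite_box[simp]: "finite (box i)" by (simp add: box_def)
lemma card_box[simp]: "card (box i) = 4" by (simp add: box_def)
lemma finite_board[simp]: "finite (board n)" by (simp add: board_def)

lemma board_box: "x \<in> board n \<longleftrightarrow> (\<exists>i\<in>{1..n}. x \<in> box i)"
  by (simp add: board_def)

lemma box_sub_board: "i \<in> {1..n} \<Longrightarrow> box i \<subseteq> board n"
  by (auto simp: board_def)

fun partner :: "(nat \<Rightarrow> bool) \<Rightarrow> vertex \<Rightarrow> vertex" where
  "partner \<sigma> (VA i) = (if \<sigma> i then VPos i else VNeg i)"
| "partner \<sigma> (VS i) = (if \<sigma> i then VNeg i else VPos i)"
| "partner \<sigma> (VPos i) = (if \<sigma> i then VA i else VS i)"
| "partner \<sigma> (VNeg i) = (if \<sigma> i then VS i else VA i)"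

lemma partner_partner[simp]: "partner \<sigma> (partner \<sigma> v) = v"
  by (cases v) auto

lemma partner_neq: "partner \<sigma> v \<noteq> v"
  by (cases v) auto

lemma partner_box: "v \<in> box i \<Longrightarrow> partner \<sigma> v \<in> box i"
  by (cases v) (auto simp: box_def)

lemma partner_board: "v \<in> board n \<Longrightarrow> partner \<sigma> v \<in> board n"
  by (meson board_box partner_box)

lemma inj_partner: "inj (partner \<sigma>)"
  by (metis injI partner_partner)

definition PI where
  "PI n \<sigma> A E \<longleftrightarrow> A \<subseteq> board n \<and> E \<subseteq> board n \<and> A \<inter> E = {} \<and>
     (\<forall>v\<in>A. partner \<sigma> v \<in> E) \<and> (\<forall>v\<in>E. partner \<sigma> v \<in> A)"

lemma three_has_pair:
  assumes "T \<subseteq> box i" "card T = 3"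
  shows "\<exists>v\<in>T. partner \<sigma> v \<in> T"
proof (rule ccontr)
  assume "\<not> ?thesis"
  hence d: "T \<inter> partner \<sigma> ` T = {}" by blast
  have f: "finite T" using finite_subset[OF assms(1)] by simp
  have "partner \<sigma> ` T \<subseteq> box i" using assms(1) partner_box by blast
  hence "T \<union> partner \<sigma> ` T \<subseteq> box i" using assms by blast
  hence "card (T \<union> partner \<sigma> ` T) \<le> card (box i)" by (intro card_mono) auto
  hence "card (T \<union> partner \<sigma> ` T) \<le> 4" by simp
  moreover have "card (partner \<sigma> ` T) = 3"
  proof -
    have "inj_on (partner \<sigma>) T" using inj_partner by (rule inj_on_subset) simp
    thus ?thesis using assms(2) by (simp add: card_image)
  qed
  moreover have "card (T \<union> partner \<sigma> ` T) = card T + card (partner \<sigma> ` T)"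
    using d f by (simp add: card_Un_disjoint)
  ultimately show False using assms by simp
qed

lemma PI_end:
  assumes "PI n \<sigma> A E" "\<forall>C\<in>set \<phi>. \<exists>l\<in>clause_lits C. lit_true \<sigma> l"
  shows "\<forall>f\<in>losing_sets n \<phi>. \<not> f \<subseteq> A"
proof
  fix f assume "f \<in> losing_sets n \<phi>"
  then consider (b) i where "f \<subseteq> box i" "card f = 3"
    | (c) C where "C \<in> set \<phi>" "f = clause_set C"
    unfolding losing_sets_def by blast
  thus "\<not> f \<subseteq> A"
  proof cases
    case b
    then obtain v where v: "v \<in> f" "partner \<sigma> v \<in> f" using three_has_pair[OF b(1,2)] by blast
    have dj: "A \<inter> E = {}" and pa: "\<forall>v\<in>A. partner \<sigma> v \<in> E" using assms(1) unfolding PI_def by simp_all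
    show ?thesis
    proof
      assume "f \<subseteq> A"
      hence "v \<in> A" "partner \<sigma> v \<in> A" using v by auto
      thus False using dj pa by blast
    qed
  next
    case c
    obtain l1 l2 l3 where C: "C = (l1, l2, l3)" by (cases C) auto
    have "\<exists>l\<in>clause_lits C. lit_true \<sigma> l" using assms(2) c(1) by blast
    hence "\<exists>l\<in>{l1,l2,l3}. lit_true \<sigma> l" unfolding C by (simp only: clause_lits.simps)
    then obtain l where l: "l \<in> {l1,l2,l3}" "lit_true \<sigma> l" by blast
    obtain i b where lb: "l = (i, b)" by (cases l) auto
    have f: "f = {VS (fst l1), VS (fst l2), VS (fst l3),
      lit_vertex (neg_lit l1), lit_vertex (neg_lit l2), lit_vertex (neg_lit l3)}" using c(2) C by simp
    have "VS i \<in> f" "lit_vertex (neg_lit l) \<in> f" using l(1) lb unfolding f by auto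
    moreover have "lit_vertex (neg_lit l) = partner \<sigma> (VS i)"
      using l(2) lb by (cases b) (auto simp: lit_true_def)
    moreover have dj: "A \<inter> E = {}" and pa: "\<forall>v\<in>A. partner \<sigma> v \<in> E" using assms(1) unfolding PI_def by simp_all
    ultimately show ?thesis by (metis disjoint_iff subsetD)
  qed
qed
lemma PI_win:
  assumes "\<forall>C\<in>set \<phi>. \<exists>l\<in>clause_lits C. lit_true \<sigma> l"
  shows "k = card (board n - (A \<union> E)) \<Longrightarrow> PI n \<sigma> A E \<Longrightarrow> aw (board n) (losing_sets n \<phi>) A E Enforcer"
proof (induction k arbitrary: A E rule: less_induct)
  case (less k)
  show ?case
  proof (cases "board n \<subseteq> A \<union> E")
    case True
    then show ?thesis using PI_end[OF less.prems(2) assms] by (intro aw.game_over) auto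
  next
    case False
    show ?thesis
    proof (rule aw.enforcer_move)
      show "board n - (A \<union> E) \<noteq> {}" using False by blast
      show "\<forall>x\<in>board n - (A \<union> E). aw (board n) (losing_sets n \<phi>) A (insert x E) Avoider"
      proof
        fix x assume x: "x \<in> board n - (A \<union> E)"
        let ?y = "partner \<sigma> x"
        have P: "PI n \<sigma> A E" by fact
        have y: "?y \<in> board n - (A \<union> insert x E)"
        proof -
          have "?y \<in> board n" using x partner_board by blast
          moreover have "?y \<notin> A"
          proof
            assume "?y \<in> A" hence "partner \<sigma> ?y \<in> E" using P unfolding PI_def by blast
            thus False using x by simp
          qed
          moreover have "?y \<notin> E"
          proof
            assume "?y \<in> E" hence "partner \<sigma> ?y \<in> A" using P unfolding PI_def by blast
            thus False using x by simp
          qed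
          moreover have "?y \<noteq> x" by (rule partner_neq)
          ultimately show ?thesis by blast
        qed
        have P2: "PI n \<sigma> (insert ?y A) (insert x E)"
          using P x y unfolding PI_def by auto
        have "card (board n - (insert ?y A \<union> insert x E)) < k"
        proof -
          have "board n - (insert ?y A \<union> insert x E) \<subset> board n - (A \<union> E)"
            using x by auto
          thus ?thesis using less.prems(1) by (simp add: psubset_card_mono)
        qed
        hence "aw (board n) (losing_sets n \<phi>) (insert ?y A) (insert x E) Enforcer"
          using less.IH P2 by blast
        thus "aw (board n) (losing_sets n \<phi>) A (insert x E) Avoider"
          using y by (intro aw.avoider_move) auto
      qed
    qed
  qed
qed

lemma sat_win:
  assumes "satisfiable \<phi>"
  shows "aw (board n) (losing_sets n \<phi>) {} {} Enforcer"
proof -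
  obtain \<sigma> where "\<forall>C\<in>set \<phi>. \<exists>l\<in>clause_lits C. lit_true \<sigma> l"
    using assms unfolding satisfiable_def by blast
  thus ?thesis using PI_win[of \<phi> \<sigma> _ n "{}" "{}"] by (simp add: PI_def)
qed



definition fresh :: "vertex set \<Rightarrow> vertex set \<Rightarrow> nat \<Rightarrow> bool" where
  "fresh A E i \<longleftrightarrow> A \<inter> box i = {} \<and> E \<inter> box i = {}"
definition good :: "vertex set \<Rightarrow> vertex set \<Rightarrow> nat \<Rightarrow> bool" where
  "good A E i \<longleftrightarrow> (A \<inter> box i = {VS i, VNeg i} \<and> E \<inter> box i = {VA i, VPos i}) \<or>
                   (A \<inter> box i = {VS i, VPos i} \<and> E \<inter> box i = {VA i, VNeg i})"
definition half :: "vertex set \<Rightarrow> vertex set \<Rightarrow> nat \<Rightarrow> bool" where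
  "half A E i \<longleftrightarrow> E \<inter> box i = {VA i} \<and>
     (A \<inter> box i = {VS i} \<or> A \<inter> box i = {VPos i} \<or> A \<inter> box i = {VNeg i})"
definition opn :: "vertex set \<Rightarrow> vertex set \<Rightarrow> nat \<Rightarrow> bool" where
  "opn A E i \<longleftrightarrow> (E \<inter> box i = {VA i} \<and> A \<inter> box i = {}) \<or>
     ((E \<inter> box i = {VA i, VPos i} \<or> E \<inter> box i = {VA i, VNeg i}) \<and> A \<inter> box i = {VS i}) \<or>
     (E \<inter> box i = {VA i, VPos i} \<and> A \<inter> box i = {VNeg i}) \<or>
     (E \<inter> box i = {VA i, VNeg i} \<and> A \<inter> box i = {VPos i})"

definition fg where "fg A E i \<longleftrightarrow> fresh A E i \<or> good A E i"

definition basic :: "nat \<Rightarrow> vertex set \<Rightarrow> vertex set \<Rightarrow> nat \<Rightarrow> bool" where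
  "basic n A E k \<longleftrightarrow> A \<subseteq> board n \<and> E \<subseteq> board n \<and> A \<inter> E = {} \<and> card E = card A + k"

definition DD where "DD n E \<longleftrightarrow> (\<exists>i\<in>{1..n}. 3 \<le> card (E \<inter> box i))"
definition TT where "TT n A E \<longleftrightarrow> (\<exists>i\<in>{1..n}. card (A \<inter> box i) < card (E \<inter> box i))"
definition T2 where "T2 n A E \<longleftrightarrow> (\<exists>i\<in>{1..n}. card (A \<inter> box i) + 2 \<le> card (E \<inter> box i))"
definition LL where "LL n \<phi> A \<longleftrightarrow> (\<exists>f\<in>losing_sets n \<phi>. f \<subseteq> A)"
definition GE where "GE n A E \<longleftrightarrow> (\<forall>i\<in>{1..n}. fg A E i) \<or>
   (\<exists>j\<in>{1..n}. half A E j \<and> (\<forall>i\<in>{1..n}. i \<noteq> j \<longrightarrow> fg A E i))"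
definition GA where "GA n A E \<longleftrightarrow>
   (\<exists>j\<in>{1..n}. opn A E j \<and> (\<forall>i\<in>{1..n}. i \<noteq> j \<longrightarrow> fg A E i))"

definition INVE where "INVE n \<phi> A E \<longleftrightarrow> basic n A E 0 \<and> (DD n E \<or> TT n A E \<or> LL n \<phi> A \<or> GE n A E)"
definition INVA where "INVA n \<phi> A E \<longleftrightarrow> basic n A E 1 \<and> (DD n E \<or> T2 n A E \<or> LL n \<phi> A \<or> GA n A E)"

lemma ins_box: "x \<in> box j \<Longrightarrow> insert x A \<inter> box i = (if i = j then insert x (A \<inter> box i) else A \<inter> box i)"
  using box_disj by auto

lemma full_card:
  assumes "box i \<subseteq> A \<union> E" "A \<inter> E = {}"
  shows "card (A \<inter> box i) + card (E \<inter> box i) = 4"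
proof -
  have "box i = (A \<inter> box i) \<union> (E \<inter> box i)" using assms(1) by blast
  moreover have "(A \<inter> box i) \<inter> (E \<inter> box i) = {}" using assms(2) by blast
  ultimately have "card (box i) = card (A \<inter> box i) + card (E \<inter> box i)"
    by (metis card_Un_disjoint finite_Int finite_box)
  thus ?thesis by simp
qed

lemma card_split:
  assumes "S \<subseteq> board n"
  shows "card S = (\<Sum>j\<in>{1..n}. card (S \<inter> box j))"
proof -
  have "S = (\<Union>j\<in>{1..n}. S \<inter> box j)" using assms unfolding board_def by blast
  hence "card S = card (\<Union>j\<in>{1..n}. S \<inter> box j)" by simp
  also have "\<dots> = (\<Sum>j\<in>{1..n}. card (S \<inter> box j))"
  proof (rule card_UN_disjoint)
    show "finite {1..n}" by simp
    show "\<forall>i\<in>{1..n}. finite (S \<inter> box i)" by simp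
    show "\<forall>i\<in>{1..n}. \<forall>j\<in>{1..n}. i \<noteq> j \<longrightarrow> S \<inter> box i \<inter> (S \<inter> box j) = {}"
      using box_disj by blast
  qed
  finally show ?thesis .
qed

lemma box_le2:
  assumes "\<forall>f\<in>losing_sets n \<phi>. \<not> f \<subseteq> A" "j \<in> {1..n}"
  shows "card (A \<inter> box j) \<le> 2"
proof (rule ccontr)
  assume "\<not> ?thesis"
  hence "3 \<le> card (A \<inter> box j)" by simp
  then obtain T where T: "T \<subseteq> A \<inter> box j" "card T = 3" by (metis obtain_subset_with_card_n)
  hence "T \<in> losing_sets n \<phi>" using assms(2) unfolding losing_sets_def by blast
  thus False using assms(1) T(1) by blast
qed

lemma cnt:
  assumes "A \<subseteq> board n" "E \<subseteq> board n" "A \<inter> E = {}" "board n \<subseteq> A \<union> E"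
    "\<forall>f\<in>losing_sets n \<phi>. \<not> f \<subseteq> A" "i \<in> {1..n}" "3 \<le> card (E \<inter> box i)"
  shows "card A + 2 \<le> card E"
proof -
  have full: "\<And>j. j \<in> {1..n} \<Longrightarrow> card (A \<inter> box j) + card (E \<inter> box j) = 4"
    using full_card assms(3,4) box_sub_board by (metis order_trans)
  have le2: "\<And>j. j \<in> {1..n} \<Longrightarrow> card (A \<inter> box j) \<le> 2" using box_le2[OF assms(5)] by blast
  have ai: "card (A \<inter> box i) \<le> 1" using full[OF assms(6)] assms(7) by simp
  have "card A + card E = (\<Sum>j\<in>{1..n}. card (A \<inter> box j) + card (E \<inter> box j))"
    using card_split[OF assms(1)] card_split[OF assms(2)] by (simp add: sum.distrib)
  also have "\<dots> = (\<Sum>j\<in>{1..n}. 4)" using full by (intro sum.cong) auto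
  finally have tot: "card A + card E = 4 * n" by simp
  have "card A = card (A \<inter> box i) + (\<Sum>j\<in>{1..n}-{i}. card (A \<inter> box j))"
    using card_split[OF assms(1)] assms(6) by (simp add: sum.remove)
  also have "(\<Sum>j\<in>{1..n}-{i}. card (A \<inter> box j)) \<le> card ({1..n}-{i}) * 2"
    using sum_bounded_above[of "{1..n}-{i}" "\<lambda>j. card (A \<inter> box j)" 2] le2 by simp
  also have "card ({1..n}-{i}) = n - 1" using assms(6) by simp
  finally have "card A \<le> 1 + (n - 1) * 2" using ai by linarith
  thus ?thesis using tot assms(6) by auto
qed



lemma card_ins: "x \<notin> S \<Longrightarrow> S \<subseteq> board n \<Longrightarrow> card (insert x S) = card S + 1"
  using finite_subset[OF _ finite_board] by simp

lemma opn_step: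
  assumes "opn A E j" "x \<in> box j" "x \<notin> A" "x \<notin> E"
  shows "half (insert x A) E j \<or> good (insert x A) E j"
proof -
  have i: "insert x A \<inter> box j = insert x (A \<inter> box j)" using ins_box[OF assms(2)] by simp
  have x: "x = VA j \<or> x = VS j \<or> x = VPos j \<or> x = VNeg j" using assms(2) unfolding box_def by blast
  have xa: "x \<notin> A \<inter> box j" "x \<notin> E \<inter> box j" using assms(3,4) by blast+
  show ?thesis using assms(1) x xa unfolding half_def good_def opn_def i
    by (elim disjE conjE; simp; blast)
qed

lemma opn_gt: "opn A E j \<Longrightarrow> card (A \<inter> box j) < card (E \<inter> box j)"
  unfolding opn_def by (elim disjE conjE; simp)

lemma stepA:
  assumes "INVA n \<phi> A E" "x \<in> board n - (A \<union> E)"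
  shows "INVE n \<phi> (insert x A) E"
proof -
  have b: "basic n A E 1" using assms(1) unfolding INVA_def by simp
  have xA: "x \<notin> A" and xE: "x \<notin> E" and xb: "x \<in> board n" using assms(2) by auto
  have b2: "basic n (insert x A) E 0"
    using b xb xA xE card_ins[OF xA] unfolding basic_def by auto
  obtain k where k: "k \<in> {1..n}" "x \<in> box k" using xb board_box by blast
  have other: "\<And>i. i \<noteq> k \<Longrightarrow> insert x A \<inter> box i = A \<inter> box i" using ins_box[OF k(2)] by simp
  have same: "insert x A \<inter> box k = insert x (A \<inter> box k)" using ins_box[OF k(2)] by simp
  have fin: "\<And>i. finite (A \<inter> box i)" by simp
  have cardk: "card (insert x A \<inter> box k) = card (A \<inter> box k) + 1"
    unfolding same using xA fin by simp
  have "DD n E \<or> TT n (insert x A) E \<or> LL n \<phi> (insert x A) \<or> GE n (insert x A) E"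
  proof -
    consider "DD n E" | "T2 n A E" | "LL n \<phi> A" | "GA n A E" using assms(1) unfolding INVA_def by blast
    thus ?thesis
    proof cases
      case 1 thus ?thesis by simp
    next
      case 2
      then obtain i where i: "i \<in> {1..n}" "card (A \<inter> box i) + 2 \<le> card (E \<inter> box i)" unfolding T2_def by blast
      have "card (insert x A \<inter> box i) < card (E \<inter> box i)"
        using i(2) cardk other by (cases "i = k") auto
      thus ?thesis using i(1) unfolding TT_def by blast
    next
      case 3 thus ?thesis unfolding LL_def by blast
    next
      case 4
      then obtain j where j: "j \<in> {1..n}" "opn A E j" "\<forall>i\<in>{1..n}. i \<noteq> j \<longrightarrow> fg A E i"
        unfolding GA_def by blast
      show ?thesis
      proof (cases "k = j")
        case False
        have "card (insert x A \<inter> box j) < card (E \<inter> box j)"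
          using opn_gt[OF j(2)] other[of j] False by simp
        thus ?thesis using j(1) unfolding TT_def by blast
      next
        case True
        have fgo: "\<forall>i\<in>{1..n}. i \<noteq> j \<longrightarrow> fg (insert x A) E i"
          using j(3) other True unfolding fg_def fresh_def good_def by simp
        have "half (insert x A) E j \<or> good (insert x A) E j"
          using opn_step[OF j(2)] k(2) xA xE True by blast
        thus ?thesis
        proof
          assume "half (insert x A) E j"
          thus ?thesis using fgo j(1) unfolding GE_def by blast
        next
          assume "good (insert x A) E j"
          hence "\<forall>i\<in>{1..n}. fg (insert x A) E i" using fgo unfolding fg_def by metis
          thus ?thesis unfolding GE_def by blast
        qed
      qed
    qed
  qed
  thus ?thesis using b2 unfolding INVE_def by blast
qed



lemma INVA_intro:
  assumes "basic n A E 0" "x \<in> board n - (A \<union> E)"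
    "DD n (insert x E) \<or> T2 n A (insert x E) \<or> LL n \<phi> A \<or> GA n A (insert x E)"
  shows "INVA n \<phi> A (insert x E)"
proof -
  have xE: "x \<notin> E" and xA: "x \<notin> A" and xb: "x \<in> board n" using assms(2) by auto
  have b: "A \<subseteq> board n" "E \<subseteq> board n" "A \<inter> E = {}" "card E = card A"
    using assms(1) unfolding basic_def by auto
  have c: "card (insert x E) = card E + 1" using card_ins[OF xE b(2)] .
  have "insert x E \<subseteq> board n" using xb b(2) by blast
  moreover have "A \<inter> insert x E = {}" using xA b(3) by blast
  ultimately have "basic n A (insert x E) 1" using c b(1,4) unfolding basic_def by simp
  thus ?thesis using assms(3) unfolding INVA_def by blast
qed

lemma DD_mono: "DD n E \<Longrightarrow> DD n (insert x E)"
proof -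
  assume "DD n E"
  then obtain i where i: "i \<in> {1..n}" "3 \<le> card (E \<inter> box i)" unfolding DD_def by blast
  have "card (E \<inter> box i) \<le> card (insert x E \<inter> box i)"
    by (rule card_mono) (simp, blast)
  hence "3 \<le> card (insert x E \<inter> box i)" using i(2) by linarith
  thus ?thesis using i(1) unfolding DD_def by blast
qed

lemma fg_cong:
  assumes "A' \<inter> box i = A \<inter> box i" "E' \<inter> box i = E \<inter> box i" "fg A E i"
  shows "fg A' E' i"
proof -
  have "fg A' E' i = fg A E i" by (simp only: fg_def fresh_def good_def assms(1,2))
  thus ?thesis using assms(3) by simp
qed

lemma stepE:
  assumes "INVE n \<phi> A E" "board n - (A \<union> E) \<noteq> {}"
  shows "\<exists>x\<in>board n - (A \<union> E). INVA n \<phi> A (insert x E)"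
proof -
  have b: "basic n A E 0" using assms(1) unfolding INVE_def by simp
  hence dj: "A \<inter> E = {}" unfolding basic_def by simp
  obtain x0 where x0: "x0 \<in> board n - (A \<union> E)" using assms(2) by blast
  consider "DD n E" | "TT n A E" | "LL n \<phi> A" | "GE n A E" using assms(1) unfolding INVE_def by blast
  thus ?thesis
  proof cases
    case 1
    thus ?thesis using INVA_intro[OF b x0] DD_mono x0 by blast
  next
    case 3
    thus ?thesis using INVA_intro[OF b x0] x0 by blast
  next
    case 2
    then obtain i where i: "i \<in> {1..n}" "card (A \<inter> box i) < card (E \<inter> box i)" unfolding TT_def by blast
    show ?thesis
    proof (cases "box i \<subseteq> A \<union> E")
      case True
      have "3 \<le> card (E \<inter> box i)" using full_card[OF True dj] i by linarith
      hence "DD n E" using i(1) unfolding DD_def by blast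
      thus ?thesis using INVA_intro[OF b x0] DD_mono x0 by blast
    next
      case False
      then obtain x where x: "x \<in> box i" "x \<notin> A" "x \<notin> E" by blast
      have xb: "x \<in> board n - (A \<union> E)" using x box_sub_board[OF i(1)] by blast
      have "card (insert x E \<inter> box i) = card (E \<inter> box i) + 1"
        using ins_box[OF x(1)] x(3) by simp
      hence "card (A \<inter> box i) + 2 \<le> card (insert x E \<inter> box i)" using i(2) by linarith
      hence "T2 n A (insert x E)" using i(1) unfolding T2_def by blast
      thus ?thesis using INVA_intro[OF b xb] xb by blast
    qed
  next
    case 4
    then consider (all) "\<forall>i\<in>{1..n}. fg A E i"
      | (hf) j where "j \<in> {1..n}" "half A E j" "\<forall>i\<in>{1..n}. i \<noteq> j \<longrightarrow> fg A E i"
      unfolding GE_def by blast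
    thus ?thesis
    proof cases
      case all
      obtain k where k: "k \<in> {1..n}" "x0 \<in> box k" using x0 board_box by blast
      have "fg A E k" using all k(1) by blast
      moreover have "\<not> good A E k"
      proof
        assume "good A E k"
        hence "box k \<subseteq> A \<union> E" unfolding good_def box_def by blast
        thus False using x0 k(2) by blast
      qed
      ultimately have fr: "fresh A E k" unfolding fg_def by blast
      have vb: "VA k \<in> box k" unfolding box_def by simp
      have xb: "VA k \<in> board n - (A \<union> E)"
        using fr vb box_sub_board[OF k(1)] unfolding fresh_def by blast
      have oth: "\<And>i. i \<noteq> k \<Longrightarrow> insert (VA k) E \<inter> box i = E \<inter> box i" using ins_box[OF vb] by simp
      have a0: "A \<inter> box k = {}" and e0: "E \<inter> box k = {}" using fr unfolding fresh_def by auto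
      have "insert (VA k) E \<inter> box k = insert (VA k) (E \<inter> box k)" using ins_box[OF vb, of E k] by simp
      hence e1: "insert (VA k) E \<inter> box k = {VA k}" unfolding e0 .
      have "opn A (insert (VA k) E) k"
        unfolding opn_def using e1 a0 by blast
      moreover have "\<forall>i\<in>{1..n}. i \<noteq> k \<longrightarrow> fg A (insert (VA k) E) i"
      proof (intro ballI impI)
        fix i assume "i \<in> {1..n}" "i \<noteq> k"
        thus "fg A (insert (VA k) E) i" using fg_cong[OF refl oth] all by blast
      qed
      ultimately have "GA n A (insert (VA k) E)" using k(1) unfolding GA_def by blast
      thus ?thesis using INVA_intro[OF b xb] xb by blast
    next
      case hf
      have hd: "E \<inter> box j = {VA j}"
        "A \<inter> box j = {VS j} \<or> A \<inter> box j = {VPos j} \<or> A \<inter> box j = {VNeg j}"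
        using hf(2) unfolding half_def by auto
      obtain y where y: "y = (if A \<inter> box j = {VPos j} then VNeg j else VPos j)" by simp
      have yb: "y \<in> box j" using y unfolding box_def by simp
      have yA: "y \<notin> A"
      proof
        assume "y \<in> A" hence "y \<in> A \<inter> box j" using yb by blast
        thus False using hd(2) y by (auto split: if_splits)
      qed
      have yE: "y \<notin> E"
      proof
        assume "y \<in> E" hence "y \<in> E \<inter> box j" using yb by blast
        thus False using hd(1) y by (auto split: if_splits)
      qed
      have xb: "y \<in> board n - (A \<union> E)" using yb yA yE box_sub_board[OF hf(1)] by blast
      have oth: "\<And>i. i \<noteq> j \<Longrightarrow> insert y E \<inter> box i = E \<inter> box i" using ins_box[OF yb] by simp
      have ej: "insert y E \<inter> box j = {VA j, y}" using ins_box[OF yb, of E j] hd(1) by auto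
      have "opn A (insert y E) j"
        using hd(2) y unfolding opn_def ej by (auto split: if_splits)
      moreover have "\<forall>i\<in>{1..n}. i \<noteq> j \<longrightarrow> fg A (insert y E) i"
      proof (intro ballI impI)
        fix i assume "i \<in> {1..n}" "i \<noteq> j"
        thus "fg A (insert y E) i" using fg_cong[OF refl oth] hf(3) by blast
      qed
      ultimately have "GA n A (insert y E)" using hf(1) unfolding GA_def by blast
      thus ?thesis using INVA_intro[OF b xb] xb by blast
    qed
  qed
qed

lemma good_lit:
  assumes "good A E i" "\<not> lit_true (\<lambda>i. VPos i \<in> A) (i, b)"
  shows "VS i \<in> A \<and> lit_vertex (neg_lit (i, b)) \<in> A"
proof -
  have v: "VS i \<in> box i" "VPos i \<in> box i" "VNeg i \<in> box i" unfolding box_def by auto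
  show ?thesis
  proof (cases b)
    case True
    hence "VPos i \<notin> A" using assms(2) unfolding lit_true_def by simp
    hence "A \<inter> box i = {VS i, VNeg i}" using assms(1) v unfolding good_def by auto
    thus ?thesis using True by auto
  next
    case False
    hence p: "VPos i \<in> A" using assms(2) unfolding lit_true_def by simp
    have "VS i \<in> A \<inter> box i" using assms(1) unfolding good_def by auto
    thus ?thesis using p False by auto
  qed
qed

lemma box_full: "board n \<subseteq> A \<union> E \<Longrightarrow> j \<in> {1..n} \<Longrightarrow> box j \<subseteq> A \<union> E"
  using box_sub_board[of j n] by (rule order_trans)

lemma half_card: "half A E j \<Longrightarrow> card (A \<inter> box j) + card (E \<inter> box j) = 2"
  unfolding half_def by (elim disjE conjE; simp)

lemma endE:
  assumes "INVE n \<phi> A E" "board n \<subseteq> A \<union> E" "\<forall>f\<in>losing_sets n \<phi>. \<not> f \<subseteq> A"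
    "wf_3sat n \<phi>" "\<not> satisfiable \<phi>"
  shows False
proof -
  have b: "A \<subseteq> board n" "E \<subseteq> board n" "A \<inter> E = {}" "card E = card A"
    using assms(1) unfolding INVE_def basic_def by auto
  have full: "\<And>j. j \<in> {1..n} \<Longrightarrow> card (A \<inter> box j) + card (E \<inter> box j) = 4"
    using full_card[OF box_full[OF assms(2)] b(3)] by blast
  have noD: "\<not> DD n E"
  proof
    assume "DD n E"
    then obtain i where i: "i \<in> {1..n}" "3 \<le> card (E \<inter> box i)" unfolding DD_def by blast
    have "card A + 2 \<le> card E" using cnt[OF b(1,2,3) assms(2,3) i] .
    thus False using b(4) by linarith
  qed
  consider "DD n E" | "TT n A E" | "LL n \<phi> A" | "GE n A E" using assms(1) unfolding INVE_def by blast
  thus False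
  proof cases
    case 1 thus False using noD by simp
  next
    case 2
    then obtain i where i: "i \<in> {1..n}" "card (A \<inter> box i) < card (E \<inter> box i)" unfolding TT_def by blast
    have "3 \<le> card (E \<inter> box i)" using full[OF i(1)] i(2) by linarith
    hence "DD n E" using i(1) unfolding DD_def by blast
    thus False using noD by simp
  next
    case 3 thus False using assms(3) unfolding LL_def by blast
  next
    case 4
    have nh: "\<And>j. j \<in> {1..n} \<Longrightarrow> \<not> half A E j"
    proof
      fix j assume j: "j \<in> {1..n}" "half A E j"
      thus False using full[OF j(1)] half_card[OF j(2)] by simp
    qed
    have nf: "\<And>j. j \<in> {1..n} \<Longrightarrow> \<not> fresh A E j"
    proof
      fix j assume j: "j \<in> {1..n}" "fresh A E j"
      hence "A \<inter> box j = {}" "E \<inter> box j = {}" unfolding fresh_def by simp_all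
      thus False using full[OF j(1)] by simp
    qed
    have allfg: "\<forall>i\<in>{1..n}. fg A E i"
    proof -
      have "\<not> (\<exists>j\<in>{1..n}. half A E j \<and> (\<forall>i\<in>{1..n}. i \<noteq> j \<longrightarrow> fg A E i))" using nh by blast
      thus ?thesis using 4 unfolding GE_def by blast
    qed
    have allg: "\<And>i. i \<in> {1..n} \<Longrightarrow> good A E i"
    proof -
      fix i assume i: "i \<in> {1..n}"
      have "fg A E i" using allfg i by blast
      thus "good A E i" using nf[OF i] unfolding fg_def by blast
    qed
    let ?\<sigma> = "\<lambda>i. VPos i \<in> A"
    obtain C where C: "C \<in> set \<phi>" "\<forall>l\<in>clause_lits C. \<not> lit_true ?\<sigma> l"
      using assms(5) unfolding satisfiable_def by blast
    obtain l1 l2 l3 where Ce0: "C = (l1, l2, l3)" by (cases C) auto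
    obtain i1 b1 where L1: "l1 = (i1, b1)" by (cases l1) auto
    obtain i2 b2 where L2: "l2 = (i2, b2)" by (cases l2) auto
    obtain i3 b3 where L3: "l3 = (i3, b3)" by (cases l3) auto
    have Ce: "C = ((i1,b1),(i2,b2),(i3,b3))" using Ce0 L1 L2 L3 by simp
    have "wf_clause n C" using assms(4) C(1) unfolding wf_3sat_def by blast
    hence wf: "i1 \<in> {1..n}" "i2 \<in> {1..n}" "i3 \<in> {1..n}" unfolding Ce by simp_all
    have nt: "\<not> lit_true ?\<sigma> (i1,b1)" "\<not> lit_true ?\<sigma> (i2,b2)" "\<not> lit_true ?\<sigma> (i3,b3)"
      using C(2) unfolding Ce by simp_all
    have g1: "VS i1 \<in> A \<and> lit_vertex (neg_lit (i1, b1)) \<in> A" using good_lit[OF allg[OF wf(1)] nt(1)] .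
    have g2: "VS i2 \<in> A \<and> lit_vertex (neg_lit (i2, b2)) \<in> A" using good_lit[OF allg[OF wf(2)] nt(2)] .
    have g3: "VS i3 \<in> A \<and> lit_vertex (neg_lit (i3, b3)) \<in> A" using good_lit[OF allg[OF wf(3)] nt(3)] .
    have "clause_set C \<subseteq> A" using g1 g2 g3 unfolding Ce by (simp only: clause_set.simps fst_conv) blast
    moreover have "clause_set C \<in> losing_sets n \<phi>" using C(1) unfolding losing_sets_def by blast
    ultimately show False using assms(3) by blast
  qed
qed

lemma endA:
  assumes "INVA n \<phi> A E" "board n \<subseteq> A \<union> E" "\<forall>f\<in>losing_sets n \<phi>. \<not> f \<subseteq> A"
  shows False
proof -
  have b: "A \<subseteq> board n" "E \<subseteq> board n" "A \<inter> E = {}" "card E = card A + 1"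
    using assms(1) unfolding INVA_def basic_def by auto
  have full: "\<And>j. j \<in> {1..n} \<Longrightarrow> card (A \<inter> box j) + card (E \<inter> box j) = 4"
    using full_card[OF box_full[OF assms(2)] b(3)] by blast
  have noD: "\<not> DD n E"
  proof
    assume "DD n E"
    then obtain i where i: "i \<in> {1..n}" "3 \<le> card (E \<inter> box i)" unfolding DD_def by blast
    have "card A + 2 \<le> card E" using cnt[OF b(1,2,3) assms(2,3) i] .
    thus False using b(4) by linarith
  qed
  consider "DD n E" | "T2 n A E" | "LL n \<phi> A" | "GA n A E" using assms(1) unfolding INVA_def by blast
  thus False
  proof cases
    case 1 thus False using noD by simp
  next
    case 2
    then obtain i where i: "i \<in> {1..n}" "card (A \<inter> box i) + 2 \<le> card (E \<inter> box i)" unfolding T2_def by blast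
    have "3 \<le> card (E \<inter> box i)" using full[OF i(1)] i(2) by linarith
    hence "DD n E" using i(1) unfolding DD_def by blast
    thus False using noD by simp
  next
    case 3 thus False using assms(3) unfolding LL_def by blast
  next
    case 4
    then obtain j where j: "j \<in> {1..n}" "opn A E j" unfolding GA_def by blast
    have "card (A \<inter> box j) + card (E \<inter> box j) \<noteq> 4" using j(2) unfolding opn_def
      by (elim disjE conjE; simp)
    thus False using full[OF j(1)] by simp
  qed
qed

lemma enf:
  assumes "aw X F A E p"
  shows "X = board n \<Longrightarrow> F = losing_sets n \<phi> \<Longrightarrow> wf_3sat n \<phi> \<Longrightarrow> \<not> satisfiable \<phi> \<Longrightarrow>
    (p = Enforcer \<longrightarrow> INVE n \<phi> A E) \<Longrightarrow> (p = Avoider \<longrightarrow> INVA n \<phi> A E) \<Longrightarrow> False"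
  using assms
proof (induction rule: aw.induct)
  case (game_over A E p)
  show ?case
  proof (cases p)
    case Avoider thus False using endA game_over by blast
  next
    case Enforcer thus False using endE game_over by blast
  qed
next
  case (avoider_move x A E)
  have "INVE n \<phi> (insert x A) E" using stepA avoider_move by simp
  thus False using avoider_move by simp
next
  case (enforcer_move A E)
  obtain x where x: "x \<in> board n - (A \<union> E)" "INVA n \<phi> A (insert x E)"
    using stepE enforcer_move by force
  thus False using enforcer_move by auto
qed

lemma unsat_lose:
  assumes "wf_3sat n \<phi>" "\<not> satisfiable \<phi>"
  shows "\<not> aw (board n) (losing_sets n \<phi>) {} {} Enforcer"
proof
  assume a: "aw (board n) (losing_sets n \<phi>) {} {} Enforcer"
  have "INVE n \<phi> {} {}" unfolding INVE_def basic_def GE_def fg_def fresh_def by simp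
  thus False using enf[OF a refl refl assms(1) assms(2)] by simp
qed


theorem mainTheorem2:
  fixes n :: nat and \<phi> :: "clause list"
  assumes "wf_3sat n \<phi>"
  shows "avoider_has_winning_strategy (board n) (losing_sets n \<phi>) Enforcer
           \<longleftrightarrow> satisfiable \<phi>"
  unfolding avoider_has_winning_strategy_def
  using sat_win unsat_lose[OF assms] by blast

end
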